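(* Let $0<p<1$ and let $r$ be a positive integer. A bounded row vector $\vec x=(\dots,x_{-2},x_{-1},x_0,x_1,x_2,\dots)$ (indexed by the integers) belongs to $\mathrm{rowcone}(\{\mathcal{M}_{DNB(p,r)}\})$ if for all integers $k$, $$\sum_{j=-r}^{r}(-1)^j f_B\!\left(j;\tfrac{p}{1+p},r\right)x_{k+j}\ \ge\ 0,$$ where $f_B(\cdot;\frac{p}{1+p},r)$ is the probability mass function of $X-Y$ for independent $X,Y$ having the Binomial distribution with success probability $\frac{p}{1+p}$ and $r$ trials.
   Context: The negative binomial NB$(p,r)$ distribution has mass $\binom{k+r-1}{k}p^k(1-p)^r$ on nonnegative integers $k$. $\mathcal{M}_{DNB(p,r)}$ (differenced negative binomial mechanism) is the algorithm with input domain and range the integers $\mathbb{Z}$ that adds $X-Y$ to its input, where $X,Y$ are independent NB$(p,r)$ random variables. An algorithm is identified with its output probabilities. For algorithms $\mathcal{M}$, $\mathcal{A}$ with $\mathrm{range}(\mathcal{M})\subseteq\mathrm{domain}(\mathcal{A})$ and independent randomness, $\mathcal{A}\circ\mathcal{M}$ runs $\mathcal{M}$ then $\mathcal{A}$ on its output. $\mathrm{CNF}(\mathrm{Priv})$ of a set of algorithms with domain $\mathbb{Z}$ is the smallest set $S$ containing $\mathrm{Priv}$ such that $\mathcal{M}\in S$ implies $\mathcal{A}\circ\mathcal{M}\in S$ for every such $\mathcal{A}$, and $\mathcal{M}_1,\mathcal{M}_2\in S$, $t\in[0,1]$ implies that the algorithm running $\mathcal{M}_1$ with probability $t$ and $\mathcal{M}_2$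 with probability $1-t$ is in $S$. $\mathrm{rowcone}(\mathrm{Priv})=\{(c\,P[\mathcal{M}(n)=\omega])_{n\in\mathbb{Z}} : c\ge0,\ \mathcal{M}\in\mathrm{CNF}(\mathrm{Priv}),\ \omega\in\mathrm{range}(\mathcal{M})\}$. *)

theory Defs
  imports "HOL-Probability.Probability"
begin

text \<open>Negative binomial NB(p,r) of the paper: mass (k+r-1 choose k) p^k (1-p)^r.
  The library's neg_binomial_pmf r q has mass (k+r-1 choose k) q^r (1-q)^k,
  so NB(p,r) = neg_binomial_pmf r (1-p).\<close>
definition NB :: "real \<Rightarrow> nat \<Rightarrow> nat pmf" where
  "NB p r = neg_binomial_pmf r (1 - p)"

definition M_DNB :: "real \<Rightarrow> nat \<Rightarrow> int \<Rightarrow> int pmf" where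
  "M_DNB p r n = map_pmf (\<lambda>(x, y). n + int x - int y) (pair_pmf (NB p r) (NB p r))"

definition diff_binomial_pmf :: "real \<Rightarrow> nat \<Rightarrow> int pmf" where
  "diff_binomial_pmf q r = map_pmf (\<lambda>(x, y). int x - int y) (pair_pmf (binomial_pmf r q) (binomial_pmf r q))"

inductive_set CNF :: "(int \<Rightarrow> int pmf) set \<Rightarrow> (int \<Rightarrow> int pmf) set" for Priv where
  base: "M \<in> Priv \<Longrightarrow> M \<in> CNF Priv"
| post: "M \<in> CNF Priv \<Longrightarrow> (\<lambda>n. bind_pmf (M n) A) \<in> CNF Priv"
| mix: "M1 \<in> CNF Priv \<Longrightarrow> M2 \<in> CNF Priv \<Longrightarrow> 0 \<le> t \<Longrightarrow> t \<le> 1 \<Longrightarrow>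
        (\<lambda>n. bind_pmf (bernoulli_pmf t) (\<lambda>b. if b then M1 n else M2 n)) \<in> CNF Priv"

definition rowcone :: "(int \<Rightarrow> int pmf) set \<Rightarrow> (int \<Rightarrow> real) set" where
  "rowcone Priv = {v. \<exists>c M \<omega>. c \<ge> 0 \<and> M \<in> CNF Priv \<and> v = (\<lambda>n. c * pmf (M n) \<omega>)}"

end

theory Submission
  imports Defs
begin

lemma integral_bind_pmf_bdd:
  fixes f :: "'b \<Rightarrow> real"
  assumes "\<And>x. \<bar>f x\<bar> \<le> B"
  shows "measure_pmf.expectation (bind_pmf M N) f = measure_pmf.expectation M (\<lambda>x. measure_pmf.expectation (N x) f)"
  unfolding measure_pmf_bind
  apply (rule integral_bind[where K="count_space UNIV" and B=B and B'=1])
  using assms by (auto simp: measure_pmf.emeasure_space_1 measure_pmf_in_subprob_algebra intro: measure_pmf.finite_measure_axioms)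

lemma integral_pair_pmf_bdd:
  fixes f :: "'a \<times> 'b \<Rightarrow> real"
  assumes "\<And>x. \<bar>f x\<bar> \<le> B"
  shows "measure_pmf.expectation (pair_pmf A C) f = measure_pmf.expectation A (\<lambda>a. measure_pmf.expectation C (\<lambda>c. f (a, c)))"
  unfolding pair_pmf_def
  apply (subst integral_bind_pmf_bdd[where B=B])
   apply (rule assms)
  apply (subst integral_bind_pmf_bdd[where B=B])
   apply (rule assms)
  apply simp
  done

lemma expectation_abs_le:
  fixes f :: "'a \<Rightarrow> real"
  assumes "\<And>x. \<bar>f x\<bar> \<le> B"
  shows "\<bar>measure_pmf.expectation M f\<bar> \<le> B"
proof -
  have i: "integrable (measure_pmf M) f"
    by (rule measure_pmf.integrable_const_bound[where B=B]) (use assms in auto)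
  have "\<bar>measure_pmf.expectation M f\<bar> \<le> measure_pmf.expectation M (\<lambda>x. \<bar>f x\<bar>)"
    by (rule integral_abs_bound)
  also have "\<dots> \<le> measure_pmf.expectation M (\<lambda>x. B)"
    by (rule integral_mono) (use i assms in auto)
  also have "\<dots> = B" by simp
  finally show ?thesis .
qed

definition opr :: "nat pmf \<Rightarrow> real \<Rightarrow> int \<Rightarrow> (int \<Rightarrow> real) \<Rightarrow> int \<Rightarrow> real" where
  "opr N w s f n = measure_pmf.expectation N (\<lambda>k. w ^ k * f (n + s * int k))"

lemma opr_bdd:
  assumes "\<bar>w\<bar> = 1" "\<And>n. \<bar>f n\<bar> \<le> B"
  shows "\<bar>opr N w s f n\<bar> \<le> B"
  unfolding opr_def
  by (rule expectation_abs_le) (simp add: abs_mult power_abs assms)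

lemma opr_conv:
  assumes "\<bar>w\<bar> = 1" "\<And>n. \<bar>f n\<bar> \<le> B"
  shows "opr (map_pmf (\<lambda>(a,b). a+b) (pair_pmf N1 N2)) w s f n = opr N1 w s (opr N2 w s f) n"
proof -
  have "opr (map_pmf (\<lambda>(a,b). a+b) (pair_pmf N1 N2)) w s f n =
    measure_pmf.expectation N1 (\<lambda>a. measure_pmf.expectation N2 (\<lambda>b. w ^ (a + b) * f (n + s * int (a + b))))"
    unfolding opr_def integral_map_pmf
    by (subst integral_pair_pmf_bdd[where B=B]) (auto simp: abs_mult power_abs assms)
  also have "\<dots> = opr N1 w s (opr N2 w s f) n"
    unfolding opr_def
    by (simp add: power_add algebra_simps flip: integral_mult_right_zero)
  finally show ?thesis .
qed

lemma opr_comm: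
  assumes "\<bar>w\<bar> = 1" "\<bar>w'\<bar> = 1" "\<And>n. \<bar>f n\<bar> \<le> B"
  shows "opr N w s (opr M w' s' f) n = opr M w' s' (opr N w s f) n"
proof -
  define g where "g = (\<lambda>(a::nat, b::nat). w ^ a * w' ^ b * f (n + s * int a + s' * int b))"
  have gb: "\<bar>g x\<bar> \<le> B" for x
    using assms by (auto simp: g_def abs_mult power_abs split: prod.splits)
  have "opr N w s (opr M w' s' f) n = measure_pmf.expectation (pair_pmf N M) g"
    unfolding opr_def
    by (subst integral_pair_pmf_bdd[where B=B, OF gb])
       (simp add: g_def algebra_simps flip: integral_mult_right_zero)
  also have "\<dots> = measure_pmf.expectation (pair_pmf M N) (\<lambda>(b, a). g (a, b))"
    by (subst pair_commute_pmf) (simp add: case_prod_unfold)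
  also have "\<dots> = opr M w' s' (opr N w s f) n"
    unfolding opr_def
    by (subst integral_pair_pmf_bdd[where B=B])
       (auto simp: g_def algebra_simps abs_mult power_abs assms simp del: integral_mult_right_zero simp add: integral_mult_right_zero[symmetric])
  finally show ?thesis .
qed

lemma opr_return: "opr (return_pmf 0) w s f n = f n"
  by (simp add: opr_def)

lemma NB_Suc: "NB p (Suc r) = map_pmf (\<lambda>(a,b). a+b) (pair_pmf (geometric_pmf (1-p)) (NB p r))"
  by (simp add: NB_def neg_binomial_pmf_Suc)

lemma NB_0: "NB p 0 = return_pmf 0"
  by (simp add: NB_def)

lemma binomial_Suc':
  assumes "q \<in> {0..1}"
  shows "binomial_pmf (Suc r) q = map_pmf (\<lambda>(a,b). a+b)
     (pair_pmf (map_pmf (\<lambda>b. if b then 1 else 0) (bernoulli_pmf q)) (binomial_pmf r q))"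
  by (simp add: binomial_pmf_Suc[OF assms] pair_pmf_def map_pmf_def bind_assoc_pmf bind_return_pmf)

lemma decay_zero:
  fixes d :: "int \<Rightarrow> real"
  assumes p: "0 < p" "p < 1" and rec: "\<And>n. d n = p * d (n + s)" and b: "\<And>n. \<bar>d n\<bar> \<le> C"
  shows "d n = 0"
proof -
  have k: "\<bar>d n\<bar> \<le> p ^ k * C" for k n
  proof (induction k arbitrary: n)
    case 0 then show ?case using b by simp
  next
    case (Suc k)
    have "\<bar>d n\<bar> = p * \<bar>d (n + s)\<bar>" using rec[of n] p by (simp add: abs_mult)
    also have "\<dots> \<le> p * (p ^ k * C)" using Suc[of "n+s"] p by (simp add: mult_left_mono)
    finally show ?case by simp
  qed
  show ?thesis
  proof (rule ccontr)
    assume "d n \<noteq> 0"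
    hence pos: "\<bar>d n\<bar> > 0" by simp
    have C0: "C \<ge> 0" using b[of n] by simp
    obtain k where "p ^ k < \<bar>d n\<bar> / (C + 1)"
      using real_arch_pow_inv[of "\<bar>d n\<bar> / (C + 1)" p] pos C0 p by auto
    hence "p ^ k * (C + 1) < \<bar>d n\<bar>" using C0 by (simp add: field_simps)
    moreover have "p ^ k * C \<le> p ^ k * (C + 1)" using p by simp
    ultimately show False using k[of n k] by linarith
  qed
qed

definition Bern1 :: "real \<Rightarrow> nat pmf" where
  "Bern1 q = map_pmf (\<lambda>b. if b then 1 else 0) (bernoulli_pmf q)"

lemma opr_Bern1:
  assumes "0 \<le> q" "q \<le> 1"
  shows "opr (Bern1 q) w s f n = (1 - q) * f n + q * w * f (n + s)"
  using assms by (simp add: opr_def Bern1_def algebra_simps)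

lemma single_step:
  assumes p: "0 < p" "p < 1" and b: "\<And>n. \<bar>f n\<bar> \<le> B"
  shows "opr (geometric_pmf (1-p)) 1 s (opr (Bern1 (p/(1+p))) (-1) s f) n = (1-p)/(1+p) * f n"
proof -
  define q where "q = p/(1+p)"
  have q: "0 \<le> q" "q \<le> 1" using p by (auto simp: q_def field_simps)
  define g where "g = opr (Bern1 q) (-1) s f"
  have gb: "\<bar>g n\<bar> \<le> B" for n unfolding g_def by (rule opr_bdd) (use b in auto)
  have geq: "g n = (1 - q) * f n - q * f (n + s)" for n
    unfolding g_def using q by (simp add: opr_Bern1)
  define h where "h = opr (geometric_pmf (1-p)) 1 s g"
  have hb: "\<bar>h n\<bar> \<le> B" for n unfolding h_def by (rule opr_bdd) (use gb in auto)
  have hrec: "h n = (1 - p) * g n + p * h (n + s)" for n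
  proof -
    have "h n = measure_pmf.expectation
       (bernoulli_pmf (1-p) \<bind> (\<lambda>b. if b then return_pmf 0 else map_pmf Suc (geometric_pmf (1-p))))
       (\<lambda>k. 1 ^ k * g (n + s * int k))"
      unfolding h_def opr_def using p by (subst geometric_bind_pmf_unfold) auto
    also have "\<dots> = (1 - p) * g n + p * h (n + s)"
      apply (subst integral_bind_pmf_bdd[where B=B])
      using gb p by (auto simp: h_def opr_def algebra_simps)
    finally show ?thesis .
  qed
  define c where "c = (1-p)/(1+p)"
  define d where "d = (\<lambda>n. h n - c * f n)"
  have "d n = 0"
  proof (rule decay_zero[OF p, where s=s and C="B + c * B"])
    fix n
    have "(1 - p) * g n = c * f n - p * (c * f (n + s))"
      using p by (simp add: geq c_def q_def field_simps)
    then show "d n = p * d (n + s)" using hrec[of n] by (simp add: d_def algebra_simps)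
    have c: "0 \<le> c" "c \<le> 1" using p by (auto simp: c_def field_simps)
    have "\<bar>c * f n\<bar> \<le> c * B" using c b[of n] by (simp add: abs_mult mult_left_mono)
    then show "\<bar>d n\<bar> \<le> B + c * B" using hb[of n] by (simp add: d_def)
  qed
  then show ?thesis by (simp add: d_def h_def g_def q_def c_def)
qed

lemma key:
  assumes p: "0 < p" "p < 1" and b: "\<And>n. \<bar>f n\<bar> \<le> B"
  shows "opr (NB p r) 1 s (opr (binomial_pmf r (p/(1+p))) (-1) s f) n = ((1-p)/(1+p)) ^ r * f n"
  using b
proof (induction r arbitrary: f B n)
  case 0
  have "p/(1+p) \<in> {0..1}" using p by (auto simp: field_simps)
  then show ?case by (simp add: NB_0 binomial_pmf_0 opr_return)
next
  case (Suc r)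
  define q where "q = p/(1+p)"
  define c where "c = (1-p)/(1+p)"
  have q: "q \<in> {0..1}" using p by (auto simp: q_def field_simps)
  have c: "0 \<le> c" "c \<le> 1" using p by (auto simp: c_def field_simps)
  define h where "h = opr (binomial_pmf r q) (-1) s f"
  have hb: "\<bar>h n\<bar> \<le> B" for n unfolding h_def by (rule opr_bdd) (use Suc.prems in auto)
  have F: "opr (binomial_pmf (Suc r) q) (-1) s f = opr (Bern1 q) (-1) s h"
    by (rule ext) (simp add: binomial_Suc'[OF q] opr_conv[where B=B] Suc.prems h_def Bern1_def)
  define F where "F = opr (Bern1 q) (-1) s h"
  have Fb: "\<bar>F n\<bar> \<le> B" for n unfolding F_def by (rule opr_bdd) (use hb in auto)
  have sb: "\<And>m. \<bar>c ^ r * f m\<bar> \<le> c ^ r * B"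
    using c Suc.prems by (simp add: abs_mult mult_left_mono)
  have "opr (NB p (Suc r)) 1 s F n = opr (geometric_pmf (1-p)) 1 s (opr (NB p r) 1 s F) n"
    unfolding NB_Suc by (rule opr_conv[where B=B]) (auto simp: Fb)
  also have "opr (NB p r) 1 s F = opr (Bern1 q) (-1) s (opr (NB p r) 1 s h)"
    unfolding F_def by (rule ext, rule opr_comm[where B=B]) (auto simp: hb)
  also have "opr (NB p r) 1 s h = (\<lambda>m. c ^ r * f m)"
    unfolding h_def q_def c_def by (rule ext, rule Suc.IH[OF Suc.prems])
  also have "opr (geometric_pmf (1-p)) 1 s (opr (Bern1 q) (-1) s (\<lambda>m. c ^ r * f m)) n = c * (c ^ r * f n)"
    using single_step[OF p, of "\<lambda>m. c ^ r * f m" "c ^ r * B" s n] sb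
    unfolding q_def c_def by simp
  finally have fin: "opr (NB p (Suc r)) 1 s F n = c * (c ^ r * f n)" .
  have "opr (binomial_pmf (Suc r) (p/(1+p))) (-1) s f = F" using F unfolding F_def q_def .
  with fin show ?case unfolding c_def by simp
qed

lemma powi_m1: "(-1::real) powi (int a - int b) = (-1)^a * (-1)^b"
proof -
  have "(-1::real)^b * (-1)^b = 1" by (simp flip: power_mult_distrib)
  then show ?thesis by (simp add: power_int_diff power_int_of_nat field_simps)
qed

lemma M_DNB_expect:
  assumes "\<And>m. \<bar>z m\<bar> \<le> B"
  shows "measure_pmf.expectation (M_DNB p r n) z = opr (NB p r) 1 1 (opr (NB p r) 1 (-1) z) n"
  unfolding M_DNB_def opr_def integral_map_pmf
  by (subst integral_pair_pmf_bdd[where B=B]) (auto simp: assms algebra_simps)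

lemma diff_sum:
  assumes q: "0 < q" "q < 1" and b: "\<And>m. \<bar>x m\<bar> \<le> B"
  shows "(\<Sum>j = - int r..int r. (-1) powi j * pmf (diff_binomial_pmf q r) j * x (k + j))
     = opr (binomial_pmf r q) (-1) 1 (opr (binomial_pmf r q) (-1) (-1) x) k"
proof -
  have sub: "set_pmf (diff_binomial_pmf q r) \<subseteq> {- int r..int r}"
    using q by (auto simp: diff_binomial_pmf_def)
  have "(\<Sum>j = - int r..int r. (-1) powi j * pmf (diff_binomial_pmf q r) j * x (k + j))
      = measure_pmf.expectation (diff_binomial_pmf q r) (\<lambda>j. (-1) powi j * x (k + j))"
    by (subst integral_measure_pmf_real[where A="{- int r..int r}"])
       (use sub in \<open>auto simp: algebra_simps\<close>)
  also have "\<dots> = opr (binomial_pmf r q) (-1) 1 (opr (binomial_pmf r q) (-1) (-1) x) k"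
    unfolding diff_binomial_pmf_def opr_def integral_map_pmf
    by (subst integral_pair_pmf_bdd[where B=B])
       (auto simp: b abs_mult powi_m1 power_abs algebra_simps simp del: integral_mult_right_zero
             simp add: integral_mult_right_zero[symmetric])
  finally show ?thesis .
qed

theorem theorem6:
  fixes p :: real and r :: nat and x :: "int \<Rightarrow> real"
  assumes "0 < p" and "p < 1" and "r > 0"
    and "bounded (range x)"
    and "\<And>k. (\<Sum>j = - int r..int r.
              (-1) powi j * pmf (diff_binomial_pmf (p / (1 + p)) r) j * x (k + j)) \<ge> 0"
  shows "x \<in> rowcone {M_DNB p r}"
proof -
  have p: "0 < p" "p < 1" using assms(1,2) .
  obtain B where B: "\<And>n. \<bar>x n\<bar> \<le> B"
    using assms(4) by (auto simp: bounded_iff)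
  define q where "q = p / (1 + p)"
  have q: "0 < q" "q < 1" using p by (auto simp: q_def field_simps)
  define c where "c = (1 - p) / (1 + p)"
  have c: "0 < c" "c \<le> 1" using p by (auto simp: c_def field_simps)
  define Bin where "Bin = binomial_pmf r q"
  define y where "y = opr Bin (-1) 1 (opr Bin (-1) (-1) x)"
  have y0: "y k \<ge> 0" for k
    using assms(5)[of k] diff_sum[where q=q and x=x and B=B and r=r and k=k, OF q B] by (simp add: y_def Bin_def q_def)
  have yb: "\<bar>y k\<bar> \<le> B" for k
    unfolding y_def by (rule opr_bdd, simp, rule opr_bdd) (simp_all add: B)
  have Gb: "\<bar>opr Bin (-1) (-1) x k\<bar> \<le> B" for k by (rule opr_bdd) (simp_all add: B)
  have cb: "\<And>m. \<bar>c ^ r * x m\<bar> \<le> c ^ r * B"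
    using c B by (simp add: abs_mult mult_left_mono)
  have EM: "measure_pmf.expectation (M_DNB p r n) y = c ^ r * (c ^ r * x n)" for n
  proof -
    have "measure_pmf.expectation (M_DNB p r n) y = opr (NB p r) 1 1 (opr (NB p r) 1 (-1) y) n"
      by (rule M_DNB_expect[where B=B]) (rule yb)
    also have "opr (NB p r) 1 (-1) y = opr Bin (-1) 1 (opr (NB p r) 1 (-1) (opr Bin (-1) (-1) x))"
      unfolding y_def by (rule ext, rule opr_comm[where B=B]) (auto simp: Gb)
    also have "opr (NB p r) 1 (-1) (opr Bin (-1) (-1) x) = (\<lambda>m. c ^ r * x m)"
      unfolding Bin_def q_def c_def by (rule ext, rule key[where f=x and B=B, OF p B])
    also have "opr (NB p r) 1 1 (opr Bin (-1) 1 (\<lambda>m. c ^ r * x m)) n = c ^ r * (c ^ r * x n)"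
      using key[where f="\<lambda>m. c ^ r * x m" and B="c ^ r * B" and r=r and s=1 and n=n, OF p cb] by (simp only: Bin_def q_def c_def)
    finally show ?thesis .
  qed
  define K where "K = \<bar>B\<bar> + 1"
  have K: "K > 0" by (simp add: K_def)
  define A where "A = (\<lambda>m. map_pmf (\<lambda>b. if b then (1::int) else 0) (bernoulli_pmf (y m / K)))"
  have pA: "pmf (A m) 1 = y m / K" for m
  proof -
    have inj: "inj (\<lambda>b. if b then (1::int) else 0)" by (auto simp: inj_def split: if_splits)
    have "0 \<le> y m / K" "y m / K \<le> 1" using y0[of m] yb[of m] K by (auto simp: K_def field_simps)
    then show ?thesis
      using pmf_map_inj'[OF inj, of "bernoulli_pmf (y m / K)" True] by (simp add: A_def)
  qed
  have xn: "x n = (K / (c ^ r * c ^ r)) * pmf (bind_pmf (M_DNB p r n) A) 1" for n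
  proof -
    have "pmf (bind_pmf (M_DNB p r n) A) 1 = measure_pmf.expectation (M_DNB p r n) (\<lambda>m. y m / K)"
      by (simp add: pmf_bind pA)
    also have "\<dots> = c ^ r * (c ^ r * x n) / K" by (simp add: EM)
    finally show ?thesis using K c by (simp add: field_simps)
  qed
  show ?thesis
    unfolding rowcone_def
  proof (intro CollectI exI conjI)
    show "0 \<le> K / (c ^ r * c ^ r)" using K c by simp
    show "(\<lambda>n. bind_pmf (M_DNB p r n) A) \<in> CNF {M_DNB p r}"
      by (rule CNF.post, rule CNF.base) simp
    show "x = (\<lambda>n. K / (c ^ r * c ^ r) * pmf (bind_pmf (M_DNB p r n) A) 1)"
      using xn by (intro ext) simp
  qed
qed

end
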